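(* Fix an integer $r\geq 1$ and let ${\mathbb{N}^r}^{*}=\mathbb{N}^r\setminus\{0\}$. Let $\alpha\in{\mathbb{N}^r}^{*}$, let $d$ be a non-negative integer with $d<|\alpha|$, let $p$ be a prime, and let $s=\mathrm{ord}_p\gcd(\alpha)$. Then there exists $\nu\in\mathcal{S}_{\alpha,d}$ such that $$\mathrm{ord}_p\frac{p^s((\nu))}{|\nu|}=0$$ if and only if $Q_p(\alpha)>Q_p(d)$.
   Context: $\mathbb{N}=\{0,1,2,\dots\}$. For $\alpha\in\mathbb{N}^r$, $|\alpha|=\alpha_1+\dots+\alpha_r$. For a finitely supported $\nu:{\mathbb{N}^r}^{*}\to\mathbb{N}$ (written $\nu\in\mathbb{N}^{({\mathbb{N}^r}^{*})}$), $|\nu|=\sum_\beta\nu_\beta$ and $((\nu))=|\nu|!/\prod_\beta(\nu_\beta!)$ is the multinomial coefficient. $\mathcal{S}_{\alpha,d}$ is the set of $\nu\in\mathbb{N}^{({\mathbb{N}^r}^{*})}$ with $\sum_\beta\nu_\beta\beta=\alpha$ and $|\nu|>d$ (i.e. factorizations of the monomial $x^\alpha$ into at least $d+1$ non-trivial monomials). For $q\in\mathbb{Q}\setminus\{0\}$, $\mathrm{ord}_p(q)$ is the exponent of $p$ in $q$. For $n\in\mathbb{N}$, $Q_p(n)(t)=a_st^s+\dots+a_0\in\mathbb{Z}[t]$ where $a_s\dots a_0$ are the base-$p$ digits of $n$ ($0\le a_i\le p-1$, $Q_p(n)(p)=n$); for $\alpha\in\mathbb{N}^r$, $Q_p(\alpha)=\sum_{i}Q_p(\alpha_i)$.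 For $P,Q\in\mathbb{Z}[t]$, $P>Q$ means $P(n)>Q(n)$ for all sufficiently large integers $n$. *)

theory Defs
  imports "HOL-Computational_Algebra.Computational_Algebra"
begin

text \<open>Elements of \<open>\<nat>^r\<close> are represented as lists of naturals of length r.\<close>

definition nonzero_vec :: "nat \<Rightarrow> nat list \<Rightarrow> bool" where
  "nonzero_vec r \<beta> \<longleftrightarrow> length \<beta> = r \<and> (\<exists>i<r. \<beta> ! i \<noteq> 0)"

definition supp :: "(nat list \<Rightarrow> nat) \<Rightarrow> nat list set" where
  "supp \<nu> = {\<beta>. \<nu> \<beta> \<noteq> 0}"

definition nu_size :: "(nat list \<Rightarrow> nat) \<Rightarrow> nat" where
  "nu_size \<nu> = (\<Sum>\<beta>\<in>supp \<nu>. \<nu> \<beta>)"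

definition multinom :: "(nat list \<Rightarrow> nat) \<Rightarrow> rat" where
  "multinom \<nu> = of_nat (fact (nu_size \<nu>)) / of_nat (\<Prod>\<beta>\<in>supp \<nu>. fact (\<nu> \<beta>))"

definition S_set :: "nat \<Rightarrow> nat list \<Rightarrow> nat \<Rightarrow> (nat list \<Rightarrow> nat) set" where
  "S_set r \<alpha> d = {\<nu>. finite (supp \<nu>) \<and> (\<forall>\<beta>\<in>supp \<nu>. nonzero_vec r \<beta>)
      \<and> (\<forall>i<r. (\<Sum>\<beta>\<in>supp \<nu>. \<nu> \<beta> * \<beta> ! i) = \<alpha> ! i)
      \<and> nu_size \<nu> > d}"

definition ord_rat :: "nat \<Rightarrow> rat \<Rightarrow> int" where
  "ord_rat p q = int (multiplicity (int p) (fst (quotient_of q)))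
                 - int (multiplicity (int p) (snd (quotient_of q)))"

definition Qp :: "nat \<Rightarrow> nat \<Rightarrow> int poly" where
  "Qp p n = (\<Sum>i\<le>n. monom (int ((n div p ^ i) mod p)) i)"

definition Qp_vec :: "nat \<Rightarrow> nat list \<Rightarrow> int poly" where
  "Qp_vec p \<alpha> = (\<Sum>i<length \<alpha>. Qp p (\<alpha> ! i))"

definition poly_gt :: "int poly \<Rightarrow> int poly \<Rightarrow> bool" where
  "poly_gt P Q \<longleftrightarrow> (\<exists>N::int. \<forall>n\<ge>N. poly P n > poly Q n)"

end

theory Submission
  imports Defs
begin


lemma coeff_Qp:
  assumes "p \<ge> 2"
  shows "coeff (Qp p n) i = int ((n div p ^ i) mod p)"
proof -
  have "coeff (Qp p n) i = (\<Sum>k\<le>n. if k = i then int ((n div p ^ k) mod p) else 0)"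
    unfolding Qp_def by (simp add: coeff_sum coeff_monom)
  also have "\<dots> = (if i \<le> n then int ((n div p ^ i) mod p) else 0)"
    by (simp add: sum.delta')
  also have "\<dots> = int ((n div p ^ i) mod p)"
  proof (cases "i \<le> n")
    case False
    have "n < 2 ^ n" by (rule less_exp)
    also have "\<dots> \<le> p ^ n" using assms by (simp add: power_mono)
    also have "\<dots> \<le> p ^ i" using False assms by (intro power_increasing) auto
    finally show ?thesis using False by simp
  qed simp
  finally show ?thesis .
qed

lemma Qp_rec:
  assumes "p \<ge> 2"
  shows "Qp p n = pCons (int (n mod p)) (Qp p (n div p))"
proof (rule poly_eqI)
  fix i show "coeff (Qp p n) i = coeff (pCons (int (n mod p)) (Qp p (n div p))) i"
    using assms by (cases i) (simp_all add: coeff_Qp div_mult2_eq)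
qed

lemma Qp_0 [simp]: "Qp p 0 = 0"
  unfolding Qp_def by simp

lemma poly_Qp_rec:
  assumes "p \<ge> 2"
  shows "poly (Qp p n) x = int (n mod p) + x * poly (Qp p (n div p)) x"
  by (subst Qp_rec[OF assms]) simp

lemma poly_Qp_digit:
  assumes "p \<ge> 2" "b < p"
  shows "poly (Qp p (p * a + b)) x = int b + x * poly (Qp p a) x"
  using assms by (subst poly_Qp_rec) simp_all

lemma poly_Qp_eq:
  assumes "p \<ge> 2" "m = p * q + r" "r < p"
  shows "poly (Qp p m) x = int r + x * poly (Qp p q) x"
  unfolding assms(2) by (rule poly_Qp_digit[OF assms(1,3)])

lemma poly_Qp_at_p:
  assumes "p \<ge> 2"
  shows "poly (Qp p n) (int p) = int n"
proof (induction n rule: less_induct)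
  case (less n)
  show ?case
  proof (cases "n = 0")
    case False
    then have "n div p < n" using assms by simp
    have "poly (Qp p n) (int p) = int (n mod p) + int p * poly (Qp p (n div p)) (int p)"
      using assms by (rule poly_Qp_rec)
    also have "\<dots> = int (n mod p) + int p * int (n div p)" using less[OF \<open>n div p < n\<close>] by simp
    also have "\<dots> = int n" by (metis mod_mult_div_eq of_nat_add of_nat_mult)
    finally show ?thesis .
  qed simp
qed


lemma Suc_digit_cases:
  assumes "p \<ge> 2"
  obtains "n mod p + 1 < p" "Suc n = p * (n div p) + (n mod p + 1)"
        | "n mod p = p - 1" "Suc n = p * (n div p + 1) + 0"
proof (cases "n mod p + 1 < p")
  case True
  have e: "p * (n div p) + n mod p = n" by (rule mult_div_mod_eq)
  then have "Suc n = p * (n div p) + (n mod p + 1)" by linarith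
  then show ?thesis using that(1) True by blast
next
  case False
  have "n mod p < p" using assms by simp
  then have "n mod p = p - 1" using False by linarith
  moreover have "Suc n = p * (n div p + 1)"
  proof -
    have e: "p * (n div p) + n mod p = n" by (rule mult_div_mod_eq)
    then have "Suc n = p * (n div p) + p" using \<open>n mod p = p - 1\<close> assms by linarith
    then show ?thesis by (simp add: algebra_simps)
  qed
  ultimately show ?thesis using that(2) by auto
qed

lemma poly_Qp_nonneg:
  assumes "p \<ge> 2" "x \<ge> 0"
  shows "poly (Qp p n) x \<ge> 0"
proof (induction n rule: less_induct)
  case (less n)
  show ?case
  proof (cases "n = 0")
    case False
    then have "n div p < n" using assms by simp
    then show ?thesis using less assms by (subst poly_Qp_rec) simp_all
  qed simp
qed

lemma poly_Qp_Suc: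
  assumes "p \<ge> 2" "x \<ge> int p"
  shows "poly (Qp p (Suc n)) x \<ge> poly (Qp p n) x + 1"
proof (induction n rule: less_induct)
  case (less n)
  have x0: "x \<ge> 0" using assms by simp
  from Suc_digit_cases[OF assms(1), of n] show ?case
  proof cases
    case 1
    have "poly (Qp p (Suc n)) x = poly (Qp p (p * (n div p) + (n mod p + 1))) x" by (metis 1(2))
    also have "\<dots> = int (n mod p + 1) + x * poly (Qp p (n div p)) x"
      by (rule poly_Qp_digit[OF assms(1) 1(1)])
    finally have "poly (Qp p (Suc n)) x = int (n mod p + 1) + x * poly (Qp p (n div p)) x" .
    moreover have "poly (Qp p n) x = int (n mod p) + x * poly (Qp p (n div p)) x"
      by (rule poly_Qp_rec[OF assms(1)])
    ultimately show ?thesis by simp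
  next
    case 2
    have n0: "n \<noteq> 0" using 2(1) assms by (cases n) auto
    then have lt: "n div p < n" using assms by simp
    have "poly (Qp p (Suc n)) x = int 0 + x * poly (Qp p (n div p + 1)) x"
      by (rule poly_Qp_eq[OF assms(1) 2(2)]) (use assms in linarith)
    also have "\<dots> \<ge> x * (poly (Qp p (n div p)) x + 1)"
      using mult_left_mono[OF less[OF lt] x0] by simp
    finally have A: "poly (Qp p (Suc n)) x \<ge> x * poly (Qp p (n div p)) x + x"
      by (simp add: algebra_simps)
    have "poly (Qp p n) x = int (p - 1) + x * poly (Qp p (n div p)) x"
      using poly_Qp_rec[OF assms(1), of n] 2(1) by simp
    then show ?thesis using A assms by simp
  qed
qed

lemma poly_Qp_mono:
  assumes "p \<ge> 2" "x \<ge> int p" "n \<le> m"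
  shows "poly (Qp p n) x \<le> poly (Qp p m) x"
  using assms(3)
proof (induction m)
  case (Suc m)
  then show ?case using poly_Qp_Suc[OF assms(1,2), of m] by (cases "n = Suc m") auto
qed simp

lemma S_Suc:
  assumes "p \<ge> 2"
  shows "poly (Qp p (Suc n)) 1 \<le> poly (Qp p n) 1 + 1"
proof (induction n rule: less_induct)
  case (less n)
  from Suc_digit_cases[OF assms(1), of n] show ?case
  proof cases
    case 1
    have "poly (Qp p (Suc n)) 1 = poly (Qp p (p * (n div p) + (n mod p + 1))) 1" by (metis 1(2))
    also have "\<dots> = int (n mod p + 1) + 1 * poly (Qp p (n div p)) 1"
      by (rule poly_Qp_digit[OF assms(1) 1(1)])
    finally have "poly (Qp p (Suc n)) 1 = int (n mod p + 1) + poly (Qp p (n div p)) 1" by simp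
    then show ?thesis using poly_Qp_rec[OF assms(1), of n 1] by simp
  next
    case 2
    have n0: "n \<noteq> 0" using 2(1) assms by (cases n) auto
    then have lt: "n div p < n" using assms by simp
    have "poly (Qp p (Suc n)) 1 = int 0 + 1 * poly (Qp p (n div p + 1)) 1"
      by (rule poly_Qp_eq[OF assms(1) 2(2)]) (use assms in linarith)
    moreover have "poly (Qp p n) 1 = int (p - 1) + poly (Qp p (n div p)) 1"
      using poly_Qp_rec[OF assms(1), of n] 2(1) by simp
    ultimately show ?thesis using less[OF lt] assms by simp
  qed
qed

lemma poly_Qp_super:
  assumes "p \<ge> 2" "x \<ge> int p"
  shows "poly (Qp p (a + b)) x \<ge> poly (Qp p a) x + poly (Qp p b) x"
proof (induction a arbitrary: b rule: less_induct)
  case (less a)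
  have x0: "x \<ge> 0" using assms by simp
  show ?case
  proof (cases "a = 0")
    case True then show ?thesis by simp
  next
    case False
    then have lt: "a div p < a" using assms by simp
    have IH: "poly (Qp p (a div p + b div p)) x \<ge> poly (Qp p (a div p)) x + poly (Qp p (b div p)) x"
      using less[OF lt] .
    have Ea: "poly (Qp p a) x = int (a mod p) + x * poly (Qp p (a div p)) x"
      by (rule poly_Qp_rec[OF assms(1)])
    have Eb: "poly (Qp p b) x = int (b mod p) + x * poly (Qp p (b div p)) x"
      by (rule poly_Qp_rec[OF assms(1)])
    have sum: "a + b = p * (a div p + b div p) + (a mod p + b mod p)"
      by (simp add: algebra_simps)
    show ?thesis
    proof (cases "a mod p + b mod p < p")
      case True
      have "poly (Qp p (a + b)) x = int (a mod p + b mod p) + x * poly (Qp p (a div p + b div p)) x"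
        using True assms sum by (intro poly_Qp_eq) simp_all
      moreover have "x * poly (Qp p (a div p + b div p)) x \<ge> x * (poly (Qp p (a div p)) x + poly (Qp p (b div p)) x)"
        using IH x0 by (rule mult_left_mono)
      ultimately show ?thesis using Ea Eb by (simp add: algebra_simps)
    next
      case False
      have sum2: "a + b = p * (Suc (a div p + b div p)) + (a mod p + b mod p - p)"
        using False sum by simp
      have r: "a mod p + b mod p - p < p"
        using assms mod_less_divisor[of p a] mod_less_divisor[of p b] by linarith
      have "poly (Qp p (a + b)) x = int (a mod p + b mod p - p) + x * poly (Qp p (Suc (a div p + b div p))) x"
        using r assms sum2 by (intro poly_Qp_eq) simp_all
      moreover have "x * poly (Qp p (Suc (a div p + b div p))) x \<ge> x * (poly (Qp p (a div p)) x + poly (Qp p (b div p)) x + 1)"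
        using IH poly_Qp_Suc[OF assms, of "a div p + b div p"] x0 by (intro mult_left_mono) auto
      moreover have "int (a mod p + b mod p - p) = int (a mod p) + int (b mod p) - int p"
        using False by simp
      ultimately show ?thesis using Ea Eb assms by (simp add: algebra_simps)
    qed
  qed
qed

lemma poly_Qp_sub:
  assumes "p \<ge> 2"
  shows "poly (Qp p (a + b)) 1 \<le> poly (Qp p a) 1 + poly (Qp p b) 1 \<and>
         (poly (Qp p (a + b)) 1 = poly (Qp p a) 1 + poly (Qp p b) 1 \<longrightarrow>
            (\<forall>x. poly (Qp p (a + b)) x = poly (Qp p a) x + poly (Qp p b) x))"
proof (induction a arbitrary: b rule: less_induct)
  case (less a)
  show ?case
  proof (cases "a = 0")
    case True then show ?thesis by simp
  next
    case False
    then have lt: "a div p < a" using assms by simp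
    note IH = less[OF lt, of "b div p"]
    have Ea: "\<And>x. poly (Qp p a) x = int (a mod p) + x * poly (Qp p (a div p)) x"
      by (rule poly_Qp_rec[OF assms(1)])
    have Eb: "\<And>x. poly (Qp p b) x = int (b mod p) + x * poly (Qp p (b div p)) x"
      by (rule poly_Qp_rec[OF assms(1)])
    have sum: "a + b = p * (a div p + b div p) + (a mod p + b mod p)"
      by (simp add: algebra_simps)
    show ?thesis
    proof (cases "a mod p + b mod p < p")
      case True
      have E: "\<And>x. poly (Qp p (a + b)) x = int (a mod p + b mod p) + x * poly (Qp p (a div p + b div p)) x"
        using True assms sum by (intro poly_Qp_eq) simp_all
      show ?thesis
      proof
        show "poly (Qp p (a + b)) 1 \<le> poly (Qp p a) 1 + poly (Qp p b) 1"
          using E[of 1] Ea[of 1] Eb[of 1] IH by simp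
        show "poly (Qp p (a + b)) 1 = poly (Qp p a) 1 + poly (Qp p b) 1 \<longrightarrow>
            (\<forall>x. poly (Qp p (a + b)) x = poly (Qp p a) x + poly (Qp p b) x)"
        proof (intro impI allI)
          fix x assume "poly (Qp p (a + b)) 1 = poly (Qp p a) 1 + poly (Qp p b) 1"
          then have "poly (Qp p (a div p + b div p)) 1 = poly (Qp p (a div p)) 1 + poly (Qp p (b div p)) 1"
            using E[of 1] Ea[of 1] Eb[of 1] by simp
          then have "poly (Qp p (a div p + b div p)) x = poly (Qp p (a div p)) x + poly (Qp p (b div p)) x"
            using IH by blast
          then show "poly (Qp p (a + b)) x = poly (Qp p a) x + poly (Qp p b) x"
            using E[of x] Ea[of x] Eb[of x] by (simp add: algebra_simps)
        qed
      qed
    next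
      case False
      have sum2: "a + b = p * (Suc (a div p + b div p)) + (a mod p + b mod p - p)"
        using False sum by simp
      have r: "a mod p + b mod p - p < p"
        using assms mod_less_divisor[of p a] mod_less_divisor[of p b] by linarith
      have "poly (Qp p (a + b)) 1 = int (a mod p + b mod p - p) + 1 * poly (Qp p (Suc (a div p + b div p))) 1"
        using r assms sum2 by (intro poly_Qp_eq) simp_all
      moreover have "int (a mod p + b mod p - p) = int (a mod p) + int (b mod p) - int p"
        using False by simp
      moreover note S_Suc[OF assms, of "a div p + b div p"]
      ultimately have "poly (Qp p (a + b)) 1 < poly (Qp p a) 1 + poly (Qp p b) 1"
        using Ea[of 1] Eb[of 1] IH assms by simp
      then show ?thesis by simp
    qed
  qed
qed


lemma poly_Qp_pow:
  assumes "p \<ge> 2" "b < p ^ k"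
  shows "poly (Qp p (p ^ k * a + b)) x = x ^ k * poly (Qp p a) x + poly (Qp p b) x"
  using assms(2)
proof (induction k arbitrary: b)
  case 0
  then show ?case by simp
next
  case (Suc k)
  have bd: "b div p < p ^ k" using Suc.prems assms
    by (simp add: div_less_iff_less_mult mult.commute)
  have e: "p ^ Suc k * a + b = p * (p ^ k * a + b div p) + b mod p"
    by (simp add: algebra_simps mult_div_mod_eq)
  have r: "b mod p < p" using assms by simp
  have "poly (Qp p (p ^ Suc k * a + b)) x = int (b mod p) + x * poly (Qp p (p ^ k * a + b div p)) x"
    by (rule poly_Qp_eq[OF assms(1) e r])
  also have "\<dots> = int (b mod p) + x * (x ^ k * poly (Qp p a) x + poly (Qp p (b div p)) x)"
    using Suc.IH[OF bd] by simp
  also have "\<dots> = x ^ Suc k * poly (Qp p a) x + (int (b mod p) + x * poly (Qp p (b div p)) x)"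
    by (simp add: algebra_simps)
  also have "int (b mod p) + x * poly (Qp p (b div p)) x = poly (Qp p b) x"
    by (rule poly_Qp_rec[OF assms(1), symmetric])
  finally show ?case .
qed

lemma poly_Qp_pow0:
  assumes "p \<ge> 2"
  shows "poly (Qp p (p ^ k * a)) x = x ^ k * poly (Qp p a) x"
  using poly_Qp_pow[OF assms, of 0 k a x] assms by simp

lemma poly_Qp_small:
  assumes "p \<ge> 2" "x \<ge> int p" "b < p ^ k"
  shows "poly (Qp p b) x < x ^ k"
  using assms(3)
proof (induction k arbitrary: b)
  case 0
  then show ?case by simp
next
  case (Suc k)
  have bd: "b div p < p ^ k" using Suc.prems assms
    by (simp add: div_less_iff_less_mult mult.commute)
  have "poly (Qp p (b div p)) x \<le> x ^ k - 1" using Suc.IH[OF bd] by simp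
  then have "x * poly (Qp p (b div p)) x \<le> x * (x ^ k - 1)"
    using assms by (intro mult_left_mono) auto
  moreover have "int (b mod p) < x" using assms mod_less_divisor[of p b] by linarith
  moreover have "poly (Qp p b) x = int (b mod p) + x * poly (Qp p (b div p)) x"
    by (rule poly_Qp_rec[OF assms(1)])
  ultimately show ?case by (simp add: algebra_simps)
qed

lemma S_pm1:
  assumes "p \<ge> 2"
  shows "poly (Qp p (p ^ k - 1)) 1 = int (p - 1) * int k"
proof (induction k)
  case 0
  then show ?case by simp
next
  case (Suc k)
  have pk: "p ^ k \<ge> 1" using assms by simp
  have e: "p ^ Suc k - 1 = p * (p ^ k - 1) + (p - 1)"
    using pk assms by (simp add: algebra_simps diff_mult_distrib2)
  have "poly (Qp p (p ^ Suc k - 1)) 1 = int (p - 1) + 1 * poly (Qp p (p ^ k - 1)) 1"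
    by (rule poly_Qp_eq[OF assms(1) e]) (use assms in simp)
  then show ?case using Suc.IH by (simp add: algebra_simps)
qed

lemma S_Suc_mult:
  assumes "prime p"
  shows "poly (Qp p (Suc n)) 1 + int (p - 1) * int (multiplicity (int p) (int (Suc n)))
         = poly (Qp p n) 1 + 1"
proof (induction n rule: less_induct)
  case (less n)
  have p2: "p \<ge> 2" using assms prime_ge_2_nat by blast
  from Suc_digit_cases[OF p2, of n] show ?case
  proof cases
    case 1
    have "poly (Qp p (Suc n)) 1 = poly (Qp p (p * (n div p) + (n mod p + 1))) 1" by (metis 1(2))
    also have "\<dots> = int (n mod p + 1) + 1 * poly (Qp p (n div p)) 1"
      by (rule poly_Qp_digit[OF p2 1(1)])
    finally have A: "poly (Qp p (Suc n)) 1 = int (n mod p + 1) + poly (Qp p (n div p)) 1" by simp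
    have "Suc n mod p = n mod p + 1" using 1(1) by (simp add: mod_Suc)
    then have "\<not> p dvd Suc n" by auto
    then have "\<not> int p dvd int (Suc n)" using int_dvd_int_iff by blast
    then have "multiplicity (int p) (int (Suc n)) = 0" by (rule not_dvd_imp_multiplicity_0)
    then show ?thesis using A poly_Qp_rec[OF p2, of n 1] by simp
  next
    case 2
    have n0: "n \<noteq> 0" using 2(1) p2 by (cases n) auto
    then have lt: "n div p < n" using p2 by simp
    have "poly (Qp p (Suc n)) 1 = int 0 + 1 * poly (Qp p (n div p + 1)) 1"
      by (rule poly_Qp_eq[OF p2 2(2)]) (use p2 in linarith)
    then have A: "poly (Qp p (Suc n)) 1 = poly (Qp p (Suc (n div p))) 1" by simp
    have "Suc n = p * Suc (n div p)" using 2(2) by (metis Suc_eq_plus1 add_0_right)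
    then have "int (Suc n) = int p * int (Suc (n div p))" by (simp only: of_nat_mult)
    then have "multiplicity (int p) (int (Suc n)) = Suc (multiplicity (int p) (int (Suc (n div p))))"
      using p2 by (simp add: multiplicity_times_same)
    moreover have "poly (Qp p n) 1 = int (p - 1) + poly (Qp p (n div p)) 1"
      using poly_Qp_rec[OF p2, of n 1] 2(1) by simp
    ultimately show ?thesis using A less[OF lt] p2 by (simp add: algebra_simps)
  qed
qed

lemma legendre:
  assumes "prime p"
  shows "int (p - 1) * int (multiplicity (int p) (int (fact n))) + poly (Qp p n) 1 = int n"
proof (induction n)
  case 0
  then show ?case by simp
next
  case (Suc n)
  have pp: "prime_elem (int p)" using assms by simp
  have "int (fact (Suc n)) = int (Suc n) * int (fact n)" by (simp only: fact_Suc of_nat_id of_nat_mult)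
  then have "multiplicity (int p) (int (fact (Suc n))) =
     multiplicity (int p) (int (Suc n)) + multiplicity (int p) (int (fact n))"
    using pp by (simp add: prime_elem_multiplicity_mult_distrib del: of_nat_Suc)
  then show ?case using Suc.IH S_Suc_mult[OF assms, of n] by (simp add: algebra_simps)
qed



lemma poly_int_trich:
  fixes P :: "int poly"
  shows "P = 0 \<or> (\<exists>N. \<forall>x\<ge>N. poly P x > 0) \<or> (\<exists>N. \<forall>x\<ge>N. poly P x < 0)"
proof (induction P rule: pCons_induct)
  case 0
  then show ?case by simp
next
  case (pCons a Q)
  show ?case
  proof (cases "Q = 0")
    case True
    then have "a \<noteq> 0" using pCons.hyps by simp
    then show ?thesis using True by (cases "a > 0") (auto intro!: exI[of _ 0])
  next
    case False
    with pCons.IH consider (pos) N where "\<forall>x\<ge>N. poly Q x > 0" | (neg) N where "\<forall>x\<ge>N. poly Q x < 0"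
      by blast
    then show ?thesis
    proof cases
      case pos
      have "\<forall>x\<ge>max N (\<bar>a\<bar> + 1). poly (pCons a Q) x > 0"
      proof (intro allI impI)
        fix x :: int assume x: "x \<ge> max N (\<bar>a\<bar> + 1)"
        then have "poly Q x \<ge> 1" using pos by force
        then have "x * poly Q x \<ge> x * 1" using x by (intro mult_left_mono) auto
        then show "poly (pCons a Q) x > 0" using x abs_ge_minus_self[of a] by simp
      qed
      then show ?thesis by blast
    next
      case neg
      have "\<forall>x\<ge>max N (\<bar>a\<bar> + 1). poly (pCons a Q) x < 0"
      proof (intro allI impI)
        fix x :: int assume x: "x \<ge> max N (\<bar>a\<bar> + 1)"
        then have "poly Q x \<le> -1" using neg by force
        then have "x * poly Q x \<le> x * (-1)" using x by (intro mult_left_mono) auto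
        then show "poly (pCons a Q) x < 0" using x abs_ge_self[of a] by simp
      qed
      then show ?thesis by blast
    qed
  qed
qed

lemma ord_rat_div:
  assumes "prime p" "a \<noteq> 0" "b \<noteq> 0"
  shows "ord_rat p (of_int a / of_int b) = int (multiplicity (int p) a) - int (multiplicity (int p) b)"
proof -
  define q :: rat where "q = of_int a / of_int b"
  obtain n d where nd: "quotient_of q = (n, d)" by (cases "quotient_of q") auto
  have d0: "d > 0" using nd by (rule quotient_of_denom_pos)
  have qe: "q = of_int n / of_int d" using nd by (rule quotient_of_div)
  have "q \<noteq> 0" using assms unfolding q_def by simp
  then have n0: "n \<noteq> 0" using qe by auto
  have "of_int a / of_int b = (of_int n / of_int d :: rat)" using qe q_def by simp
  then have "(of_int a * of_int d :: rat) = of_int n * of_int b"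
    using assms d0 by (simp add: frac_eq_eq)
  then have "a * d = n * b" by (metis of_int_eq_iff of_int_mult)
  then have "multiplicity (int p) (a * d) = multiplicity (int p) (n * b)" by simp
  moreover have "prime_elem (int p)" using assms by simp
  ultimately have "multiplicity (int p) a + multiplicity (int p) d = multiplicity (int p) n + multiplicity (int p) b"
    using assms d0 n0 by (simp add: prime_elem_multiplicity_mult_distrib)
  then show ?thesis unfolding ord_rat_def q_def[symmetric] nd by simp
qed

lemma poly_Qp_super_sum:
  assumes "p \<ge> 2" "x \<ge> int p" "finite A"
  shows "poly (Qp p (\<Sum>b\<in>A. f b)) x \<ge> (\<Sum>b\<in>A. poly (Qp p (f b)) x)"
  using assms(3)
proof (induction A rule: finite_induct)
  case (insert a A)
  then show ?case using poly_Qp_super[OF assms(1,2), of "f a" "\<Sum>b\<in>A. f b"] by simp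
qed simp

lemma poly_Qp_super_mult:
  assumes "p \<ge> 2" "x \<ge> int p"
  shows "poly (Qp p (k * a)) x \<ge> int k * poly (Qp p a) x"
proof (induction k)
  case (Suc k)
  then show ?case using poly_Qp_super[OF assms, of a "k * a"] by (simp add: algebra_simps)
qed simp

lemma poly_Qp_sub_sum:
  assumes "p \<ge> 2" "finite A"
  shows "poly (Qp p (\<Sum>b\<in>A. f b)) 1 \<le> (\<Sum>b\<in>A. poly (Qp p (f b)) 1) \<and>
         (poly (Qp p (\<Sum>b\<in>A. f b)) 1 = (\<Sum>b\<in>A. poly (Qp p (f b)) 1) \<longrightarrow>
           (\<forall>x. poly (Qp p (\<Sum>b\<in>A. f b)) x = (\<Sum>b\<in>A. poly (Qp p (f b)) x)))"
  using assms(2)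
proof (induction A rule: finite_induct)
  case (insert a A)
  define s where "s = (\<Sum>b\<in>A. f b)"
  have s1: "(\<Sum>b\<in>insert a A. f b) = f a + s" using insert unfolding s_def by simp
  have s2: "\<And>x. (\<Sum>b\<in>insert a A. poly (Qp p (f b)) x) = poly (Qp p (f a)) x + (\<Sum>b\<in>A. poly (Qp p (f b)) x)"
    using insert by simp
  note L = poly_Qp_sub[OF assms(1), of "f a" s]
  note IH = insert.IH[folded s_def]
  show ?case unfolding s1 s2
  proof
    show "poly (Qp p (f a + s)) 1 \<le> poly (Qp p (f a)) 1 + (\<Sum>b\<in>A. poly (Qp p (f b)) 1)"
      using L IH by linarith
    show "poly (Qp p (f a + s)) 1 = poly (Qp p (f a)) 1 + (\<Sum>b\<in>A. poly (Qp p (f b)) 1) \<longrightarrow>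
      (\<forall>x. poly (Qp p (f a + s)) x = poly (Qp p (f a)) x + (\<Sum>b\<in>A. poly (Qp p (f b)) x))"
    proof (intro impI allI)
      fix x
      assume eq: "poly (Qp p (f a + s)) 1 = poly (Qp p (f a)) 1 + (\<Sum>b\<in>A. poly (Qp p (f b)) 1)"
      have e1: "poly (Qp p (f a + s)) 1 = poly (Qp p (f a)) 1 + poly (Qp p s) 1"
        and e2: "poly (Qp p s) 1 = (\<Sum>b\<in>A. poly (Qp p (f b)) 1)"
        using L IH eq by linarith+
      have "poly (Qp p (f a + s)) x = poly (Qp p (f a)) x + poly (Qp p s) x" using L e1 by blast
      moreover have "poly (Qp p s) x = (\<Sum>b\<in>A. poly (Qp p (f b)) x)" using IH e2 by blast
      ultimately show "poly (Qp p (f a + s)) x = poly (Qp p (f a)) x + (\<Sum>b\<in>A. poly (Qp p (f b)) x)"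
        by simp
    qed
  qed
qed simp



lemma distrib_sum:
  fixes sl :: "nat \<Rightarrow> nat"
  assumes "k \<le> (\<Sum>i<r. sl i)"
  shows "\<exists>\<delta>. (\<forall>i<r. \<delta> i \<le> sl i) \<and> (\<Sum>i<r. \<delta> i) = k"
  using assms
proof (induction r arbitrary: k)
  case 0
  then show ?case by (intro exI[of _ "\<lambda>_. 0"]) simp
next
  case (Suc r)
  define k' where "k' = min k (\<Sum>i<r. sl i)"
  obtain \<delta> where d: "\<forall>i<r. \<delta> i \<le> sl i" "(\<Sum>i<r. \<delta> i) = k'"
    using Suc.IH[of k'] unfolding k'_def by auto
  define \<delta>' where "\<delta>' = \<delta>(r := k - k')"
  have "k - k' \<le> sl r" using Suc.prems unfolding k'_def by auto
  then have "\<forall>i<Suc r. \<delta>' i \<le> sl i" using d(1) unfolding \<delta>'_def by (auto simp: less_Suc_eq)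
  moreover have "(\<Sum>i<Suc r. \<delta>' i) = k"
  proof -
    have "(\<Sum>i<r. \<delta>' i) = (\<Sum>i<r. \<delta> i)" unfolding \<delta>'_def by (intro sum.cong) auto
    then have "(\<Sum>i<Suc r. \<delta>' i) = k' + (k - k')" using d(2) by (simp add: \<delta>'_def)
    then show ?thesis unfolding k'_def by simp
  qed
  ultimately show ?case by blast
qed

lemma fin_step:
  fixes g \<alpha> :: "nat \<Rightarrow> nat"
  assumes p2: "p \<ge> 2"
    and le: "\<forall>i<r. p * g i \<le> \<alpha> i"
    and S: "(\<Sum>i<r. poly (Qp p (g i)) 1) \<le> poly (Qp p (\<Sum>i<r. g i)) 1"
    and d0: "d0 < p"
    and lt: "p * (\<Sum>i<r. g i) + d0 < (\<Sum>i<r. \<alpha> i)"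
  shows "\<exists>\<gamma>. (\<forall>i<r. \<gamma> i \<le> \<alpha> i) \<and> (\<Sum>i<r. \<gamma> i) = p * (\<Sum>i<r. g i) + d0 \<and>
             (\<Sum>i<r. poly (Qp p (\<gamma> i)) 1) \<le> poly (Qp p (\<Sum>i<r. \<gamma> i)) 1 \<and>
             (\<Sum>i<r. \<gamma> i) < (\<Sum>i<r. \<alpha> i)"
proof -
  define sl where "sl i = \<alpha> i - p * g i" for i
  have "(\<Sum>i<r. sl i) = (\<Sum>i<r. \<alpha> i) - (\<Sum>i<r. p * g i)"
    unfolding sl_def using le by (intro sum_subtractf_nat) auto
  also have "(\<Sum>i<r. p * g i) = p * (\<Sum>i<r. g i)" by (simp add: sum_distrib_left)
  finally have "d0 \<le> (\<Sum>i<r. sl i)" using lt by simp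
  then obtain \<delta> where dl: "\<forall>i<r. \<delta> i \<le> sl i" "(\<Sum>i<r. \<delta> i) = d0"
    using distrib_sum by blast
  define \<gamma> where "\<gamma> i = p * g i + \<delta> i" for i
  have dp: "\<delta> i < p" if "i < r" for i
  proof -
    have "\<delta> i \<le> (\<Sum>i<r. \<delta> i)" using that by (intro member_le_sum) auto
    then show ?thesis using dl(2) d0 by simp
  qed
  have g1: "\<forall>i<r. \<gamma> i \<le> \<alpha> i"
  proof (intro allI impI)
    fix i assume "i < r"
    then have "\<delta> i \<le> \<alpha> i - p * g i" "p * g i \<le> \<alpha> i" using dl(1) le unfolding sl_def by auto
    then show "\<gamma> i \<le> \<alpha> i" unfolding \<gamma>_def by linarith
  qed
  have g2: "(\<Sum>i<r. \<gamma> i) = p * (\<Sum>i<r. g i) + d0"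
    unfolding \<gamma>_def using dl(2) by (simp add: sum.distrib sum_distrib_left)
  have Sg: "poly (Qp p (\<gamma> i)) 1 = int (\<delta> i) + poly (Qp p (g i)) 1" if "i < r" for i
    using poly_Qp_eq[OF p2 _ dp[OF that], of "\<gamma> i" "g i" 1] unfolding \<gamma>_def by simp
  have "(\<Sum>i<r. poly (Qp p (\<gamma> i)) 1) = (\<Sum>i<r. int (\<delta> i) + poly (Qp p (g i)) 1)"
    using Sg by (intro sum.cong) auto
  also have "\<dots> = int d0 + (\<Sum>i<r. poly (Qp p (g i)) 1)"
    using dl(2) by (simp add: sum.distrib flip: of_nat_sum)
  also have "\<dots> \<le> int d0 + poly (Qp p (\<Sum>i<r. g i)) 1" using S by simp
  also have "\<dots> = poly (Qp p (p * (\<Sum>i<r. g i) + d0)) 1"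
    using poly_Qp_eq[OF p2 refl d0, of "\<Sum>i<r. g i" 1] by simp
  finally have g3: "(\<Sum>i<r. poly (Qp p (\<gamma> i)) 1) \<le> poly (Qp p (\<Sum>i<r. \<gamma> i)) 1"
    using g2 by simp
  show ?thesis using g1 g2 g3 lt by (intro exI[of _ \<gamma>]) simp
qed


lemma sum_poly_Qp_rec:
  assumes "p \<ge> 2"
  shows "(\<Sum>i<r. poly (Qp p (\<alpha> i)) x) =
         int (\<Sum>i<r. \<alpha> i mod p) + x * (\<Sum>i<r. poly (Qp p (\<alpha> i div p)) x)"
proof -
  have "(\<Sum>i<r. poly (Qp p (\<alpha> i)) x) = (\<Sum>i<r. int (\<alpha> i mod p) + x * poly (Qp p (\<alpha> i div p)) x)"
    by (intro sum.cong refl poly_Qp_rec[OF assms])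
  also have "\<dots> = int (\<Sum>i<r. \<alpha> i mod p) + x * (\<Sum>i<r. poly (Qp p (\<alpha> i div p)) x)"
    by (simp add: sum.distrib sum_distrib_left)
  finally show ?thesis .
qed

lemma G_lemma:
  fixes \<alpha> :: "nat \<Rightarrow> nat"
  assumes p2: "p \<ge> 2"
    and hyp: "\<exists>N. \<forall>x\<ge>N. (\<Sum>i<r. poly (Qp p (\<alpha> i)) x) > poly (Qp p d) x"
  shows "\<exists>\<gamma>. (\<forall>i<r. \<gamma> i \<le> \<alpha> i) \<and> (\<Sum>i<r. \<gamma> i) = d \<and>
             (\<Sum>i<r. poly (Qp p (\<gamma> i)) 1) \<le> poly (Qp p d) 1 \<and> d < (\<Sum>i<r. \<alpha> i)"
  using hyp
proof (induction "\<Sum>i<r. \<alpha> i" arbitrary: \<alpha> d rule: less_induct)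
  case less
  obtain N where hN: "\<forall>x\<ge>N. (\<Sum>i<r. poly (Qp p (\<alpha> i)) x) > poly (Qp p d) x"
    using less.prems by blast
  define \<alpha>1 where "\<alpha>1 i = \<alpha> i div p" for i
  define A0 where "A0 = (\<Sum>i<r. \<alpha> i mod p)"
  define d1 where "d1 = d div p"
  define d0 where "d0 = d mod p"
  have d0p: "d0 < p" unfolding d0_def using p2 by simp
  have Ea: "\<And>x. (\<Sum>i<r. poly (Qp p (\<alpha> i)) x) = int A0 + x * (\<Sum>i<r. poly (Qp p (\<alpha>1 i)) x)"
    unfolding A0_def \<alpha>1_def by (rule sum_poly_Qp_rec[OF p2])
  have Ed: "\<And>x. poly (Qp p d) x = int d0 + x * poly (Qp p d1) x"
    unfolding d0_def d1_def by (rule poly_Qp_rec[OF p2])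
  have sa: "(\<Sum>i<r. \<alpha> i) = p * (\<Sum>i<r. \<alpha>1 i) + A0"
  proof -
    have "(\<Sum>i<r. \<alpha> i) = (\<Sum>i<r. p * \<alpha>1 i + \<alpha> i mod p)"
      unfolding \<alpha>1_def by (intro sum.cong refl) simp
    then show ?thesis unfolding A0_def by (simp add: sum.distrib sum_distrib_left)
  qed
  have dd: "d = p * d1 + d0" unfolding d1_def d0_def by simp
  define P where "P = (\<Sum>i<r. Qp p (\<alpha>1 i)) - Qp p d1"
  have polyP: "\<And>x. poly P x = (\<Sum>i<r. poly (Qp p (\<alpha>1 i)) x) - poly (Qp p d1) x"
    unfolding P_def by (simp add: poly_sum)
  have pos_sum: "(\<Sum>i<r. \<alpha> i) > 0"
  proof (rule ccontr)
    assume "\<not> ?thesis"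
    then have "\<forall>i<r. \<alpha> i = 0" by simp
    then have "(\<Sum>i<r. poly (Qp p (\<alpha> i)) x) = 0" for x by simp
    moreover have "poly (Qp p d) (max N 0) \<ge> 0" by (rule poly_Qp_nonneg[OF p2]) simp
    ultimately show False using hN by (metis max.cobounded1 not_le)
  qed
  have lt1: "(\<Sum>i<r. \<alpha>1 i) < (\<Sum>i<r. \<alpha> i)"
  proof -
    from pos_sum obtain j where j: "j < r" "\<alpha> j > 0"
      by (metis lessThan_iff not_gr0 sum_eq_0_iff finite_lessThan)
    show ?thesis unfolding \<alpha>1_def
      using j p2 by (intro sum_strict_mono_ex1) (auto intro!: bexI[of _ j])
  qed
  from poly_int_trich[of P] consider "P = 0" | (pos) N' where "\<forall>x\<ge>N'. poly P x > 0"
    | (neg) N' where "\<forall>x\<ge>N'. poly P x < 0" by blast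
  then show ?case
  proof cases
    case 1
    then have eqx: "\<And>x. (\<Sum>i<r. poly (Qp p (\<alpha>1 i)) x) = poly (Qp p d1) x"
      using polyP by (metis eq_iff_diff_eq_0 poly_0)
    have s1: "(\<Sum>i<r. \<alpha>1 i) = d1"
      using eqx[of "int p"] by (simp add: poly_Qp_at_p[OF p2] flip: of_nat_sum)
    have "A0 > d0"
    proof -
      define x where "x = max N 0"
      have "x \<ge> N" "x \<ge> 0" unfolding x_def by auto
      then show ?thesis using hN Ea[of x] Ed[of x] eqx[of x] by force
    qed
    have "\<exists>\<gamma>. (\<forall>i<r. \<gamma> i \<le> \<alpha> i) \<and> (\<Sum>i<r. \<gamma> i) = p * (\<Sum>i<r. \<alpha>1 i) + d0 \<and>
             (\<Sum>i<r. poly (Qp p (\<gamma> i)) 1) \<le> poly (Qp p (\<Sum>i<r. \<gamma> i)) 1 \<and>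
             (\<Sum>i<r. \<gamma> i) < (\<Sum>i<r. \<alpha> i)"
    proof (rule fin_step[OF p2 _ _ d0p])
      show "\<forall>i<r. p * \<alpha>1 i \<le> \<alpha> i" unfolding \<alpha>1_def by simp
      show "(\<Sum>i<r. poly (Qp p (\<alpha>1 i)) 1) \<le> poly (Qp p (\<Sum>i<r. \<alpha>1 i)) 1"
        using eqx[of 1] s1 by simp
      show "p * (\<Sum>i<r. \<alpha>1 i) + d0 < (\<Sum>i<r. \<alpha> i)" using sa \<open>A0 > d0\<close> by simp
    qed
    then show ?thesis using s1 dd by auto
  next
    case pos
    have "\<exists>N. \<forall>x\<ge>N. (\<Sum>i<r. poly (Qp p (\<alpha>1 i)) x) > poly (Qp p d1) x"
      using pos polyP by (intro exI[of _ N']) force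
    from less.hyps[OF lt1 this] obtain \<gamma>1 where g1: "\<forall>i<r. \<gamma>1 i \<le> \<alpha>1 i" "(\<Sum>i<r. \<gamma>1 i) = d1"
      "(\<Sum>i<r. poly (Qp p (\<gamma>1 i)) 1) \<le> poly (Qp p d1) 1" "d1 < (\<Sum>i<r. \<alpha>1 i)"
      by blast
    have "\<exists>\<gamma>. (\<forall>i<r. \<gamma> i \<le> \<alpha> i) \<and> (\<Sum>i<r. \<gamma> i) = p * (\<Sum>i<r. \<gamma>1 i) + d0 \<and>
             (\<Sum>i<r. poly (Qp p (\<gamma> i)) 1) \<le> poly (Qp p (\<Sum>i<r. \<gamma> i)) 1 \<and>
             (\<Sum>i<r. \<gamma> i) < (\<Sum>i<r. \<alpha> i)"
    proof (rule fin_step[OF p2 _ _ d0p])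
      show "\<forall>i<r. p * \<gamma>1 i \<le> \<alpha> i"
      proof (intro allI impI)
        fix i assume "i < r"
        then have "p * \<gamma>1 i \<le> p * \<alpha>1 i" using g1(1) by simp
        also have "\<dots> \<le> \<alpha> i" unfolding \<alpha>1_def by simp
        finally show "p * \<gamma>1 i \<le> \<alpha> i" .
      qed
      show "(\<Sum>i<r. poly (Qp p (\<gamma>1 i)) 1) \<le> poly (Qp p (\<Sum>i<r. \<gamma>1 i)) 1"
        using g1(2,3) by simp
      have "p * d1 + d0 < p * d1 + p" using d0p by simp
      also have "\<dots> = p * (d1 + 1)" by simp
      also have "\<dots> \<le> p * (\<Sum>i<r. \<alpha>1 i)" using g1(4) by (intro mult_left_mono) auto
      also have "\<dots> \<le> (\<Sum>i<r. \<alpha> i)" using sa by simp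
      finally show "p * (\<Sum>i<r. \<gamma>1 i) + d0 < (\<Sum>i<r. \<alpha> i)" using g1(2) by simp
    qed
    then show ?thesis using g1(2) dd by auto
  next
    case neg
    define x where "x = max (max N N') (int A0 + 1)"
    have x: "x \<ge> N" "x \<ge> N'" "x \<ge> int A0 + 1" unfolding x_def by auto
    have "poly P x \<le> -1" using neg x by force
    then have "x * poly P x \<le> x * (-1)" using x by (intro mult_left_mono) auto
    moreover have "int A0 + x * (\<Sum>i<r. poly (Qp p (\<alpha>1 i)) x) > int d0 + x * poly (Qp p d1) x"
      using hN x Ea[of x] Ed[of x] by force
    ultimately have False using x polyP[of x] by (simp add: algebra_simps)
    then show ?thesis ..
  qed
qed



definition nu_of :: "(nat list \<times> nat) list \<Rightarrow> nat list \<Rightarrow> nat" where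
  "nu_of ps \<beta> = sum_list (map snd (filter (\<lambda>q. fst q = \<beta>) ps))"

lemma nu_of_Nil [simp]: "nu_of [] \<beta> = 0"
  by (simp add: nu_of_def)

lemma nu_of_Cons: "nu_of (q # ps) \<beta> = (if fst q = \<beta> then snd q else 0) + nu_of ps \<beta>"
  by (simp add: nu_of_def)

lemma nu_of_nz: "nu_of ps \<beta> \<noteq> 0 \<Longrightarrow> \<beta> \<in> fst ` set ps"
  by (induction ps) (auto simp: nu_of_Cons split: if_splits)

lemma supp_nu_of: "supp (nu_of ps) \<subseteq> fst ` set ps"
  unfolding supp_def using nu_of_nz by blast

lemma nu_of_sum_F:
  assumes "finite F" "fst ` set ps \<subseteq> F"
  shows "(\<Sum>\<beta>\<in>F. nu_of ps \<beta> * h \<beta>) = sum_list (map (\<lambda>q. snd q * h (fst q)) ps)"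
  using assms(2)
proof (induction ps)
  case Nil
  then show ?case by simp
next
  case (Cons q ps)
  have "(\<Sum>\<beta>\<in>F. nu_of (q # ps) \<beta> * h \<beta>) =
        (\<Sum>\<beta>\<in>F. (if fst q = \<beta> then snd q * h \<beta> else 0)) + (\<Sum>\<beta>\<in>F. nu_of ps \<beta> * h \<beta>)"
  proof -
    have "nu_of (q # ps) \<beta> * h \<beta> = (if fst q = \<beta> then snd q * h \<beta> else 0) + nu_of ps \<beta> * h \<beta>" for \<beta>
      by (simp add: nu_of_Cons algebra_simps)
    then show ?thesis by (simp add: sum.distrib)
  qed
  also have "(\<Sum>\<beta>\<in>F. (if fst q = \<beta> then snd q * h \<beta> else 0)) = snd q * h (fst q)"
    using Cons.prems assms(1) by (simp add: sum.delta)
  finally show ?case using Cons by simp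
qed

lemma nu_of_sum:
  "(\<Sum>\<beta>\<in>supp (nu_of ps). nu_of ps \<beta> * h \<beta>) = sum_list (map (\<lambda>q. snd q * h (fst q)) ps)"
proof -
  have "(\<Sum>\<beta>\<in>supp (nu_of ps). nu_of ps \<beta> * h \<beta>) = (\<Sum>\<beta>\<in>fst ` set ps. nu_of ps \<beta> * h \<beta>)"
    by (rule sum.mono_neutral_left) (auto simp: supp_def intro: nu_of_nz)
  also have "\<dots> = sum_list (map (\<lambda>q. snd q * h (fst q)) ps)"
    by (rule nu_of_sum_F) auto
  finally show ?thesis .
qed

lemma nu_of_S_F:
  assumes "p \<ge> 2" "finite F" "fst ` set ps \<subseteq> F"
  shows "(\<Sum>\<beta>\<in>F. poly (Qp p (nu_of ps \<beta>)) 1) \<le> sum_list (map (\<lambda>q. poly (Qp p (snd q)) 1) ps)"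
  using assms(3)
proof (induction ps)
  case Nil
  then show ?case by simp
next
  case (Cons q ps)
  have "(\<Sum>\<beta>\<in>F. poly (Qp p (nu_of (q # ps) \<beta>)) 1) \<le>
        (\<Sum>\<beta>\<in>F. poly (Qp p (if fst q = \<beta> then snd q else 0)) 1 + poly (Qp p (nu_of ps \<beta>)) 1)"
    unfolding nu_of_Cons by (intro sum_mono) (rule conjunct1[OF poly_Qp_sub[OF assms(1)]])
  also have "\<dots> = (\<Sum>\<beta>\<in>F. (if fst q = \<beta> then poly (Qp p (snd q)) 1 else 0)) + (\<Sum>\<beta>\<in>F. poly (Qp p (nu_of ps \<beta>)) 1)"
  proof -
    have "poly (Qp p (if fst q = \<beta> then snd q else 0)) 1 = (if fst q = \<beta> then poly (Qp p (snd q)) 1 else 0)" for \<beta>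
      by simp
    then show ?thesis by (simp add: sum.distrib)
  qed
  also have "(\<Sum>\<beta>\<in>F. (if fst q = \<beta> then poly (Qp p (snd q)) 1 else 0)) = poly (Qp p (snd q)) 1"
    using Cons.prems assms(2) by (simp add: sum.delta)
  finally show ?case using Cons by simp
qed

lemma nu_of_S:
  assumes "p \<ge> 2"
  shows "(\<Sum>\<beta>\<in>supp (nu_of ps). poly (Qp p (nu_of ps \<beta>)) 1) \<le> sum_list (map (\<lambda>q. poly (Qp p (snd q)) 1) ps)"
proof -
  have "(\<Sum>\<beta>\<in>supp (nu_of ps). poly (Qp p (nu_of ps \<beta>)) 1) = (\<Sum>\<beta>\<in>fst ` set ps. poly (Qp p (nu_of ps \<beta>)) 1)"
    by (rule sum.mono_neutral_left) (auto simp: supp_def intro: nu_of_nz)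
  also have "\<dots> \<le> sum_list (map (\<lambda>q. poly (Qp p (snd q)) 1) ps)"
    by (rule nu_of_S_F[OF assms]) auto
  finally show ?thesis .
qed

lemma ord_formula:
  assumes pp: "prime p" and fin: "finite (supp \<nu>)" and n1: "nu_size \<nu> \<ge> 1"
  shows "int (p - 1) * ord_rat p (of_nat (p ^ s) * multinom \<nu> / of_nat (nu_size \<nu>)) =
         int (p - 1) * int s + (\<Sum>\<beta>\<in>supp \<nu>. poly (Qp p (\<nu> \<beta>)) 1)
         - poly (Qp p (nu_size \<nu> - 1)) 1 - 1"
proof -
  define n where "n = nu_size \<nu>"
  define F where "F = supp \<nu>"
  define Pr where "Pr = (\<Prod>\<beta>\<in>F. fact (\<nu> \<beta>) :: nat)"
  have pe: "prime_elem (int p)" using pp by simp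
  have p0: "int p \<noteq> 0" using pp by (simp add: prime_gt_0_nat)
  have "Pr > 0" unfolding Pr_def by (rule prod_pos) simp
  then have Pr0: "Pr \<noteq> 0" by simp
  have n0: "n \<noteq> 0" using n1 unfolding n_def by simp
  have eq: "(of_nat (p ^ s) * multinom \<nu> / of_nat n :: rat) =
        of_int (int (p ^ s * fact n)) / of_int (int (Pr * n))"
    unfolding multinom_def n_def Pr_def F_def by (simp add: of_nat_mult)
  have A0: "int (p ^ s * fact n) \<noteq> 0" using pp by (simp add: prime_gt_0_nat)
  have B0: "int (Pr * n) \<noteq> 0" using Pr0 n0 by simp
  have mA: "multiplicity (int p) (int (p ^ s * fact n)) = s + multiplicity (int p) (int (fact n))"
  proof -
    have "int (p ^ s * fact n) = int p ^ s * int (fact n)" by simp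
    moreover have "multiplicity (int p) (int p ^ s) = s"
      using pe p0 by (simp add: multiplicity_same_power' prime_elem_not_unit)
        (metis not_prime_1 One_nat_def)
    ultimately show ?thesis using pe p0
      by (simp add: prime_elem_multiplicity_mult_distrib del: of_nat_fact)
  qed
  have mB: "multiplicity (int p) (int (Pr * n)) =
      (\<Sum>\<beta>\<in>F. multiplicity (int p) (int (fact (\<nu> \<beta>)))) + multiplicity (int p) (int n)"
  proof -
    have "int (Pr * n) = (\<Prod>\<beta>\<in>F. int (fact (\<nu> \<beta>))) * int n" unfolding Pr_def by simp
    moreover have "multiplicity (int p) (\<Prod>\<beta>\<in>F. int (fact (\<nu> \<beta>))) = (\<Sum>\<beta>\<in>F. multiplicity (int p) (int (fact (\<nu> \<beta>))))"
      using pe fin unfolding F_def by (intro prime_elem_multiplicity_prod_distrib) auto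
    moreover have "(\<Prod>\<beta>\<in>F. int (fact (\<nu> \<beta>))) \<noteq> 0" using fin unfolding F_def by (auto simp: prod_zero_iff)
    ultimately show ?thesis using pe n0 by (simp add: prime_elem_multiplicity_mult_distrib del: of_nat_fact)
  qed
  have ord: "ord_rat p (of_nat (p ^ s) * multinom \<nu> / of_nat n) =
      int s + int (multiplicity (int p) (int (fact n)))
      - (\<Sum>\<beta>\<in>F. int (multiplicity (int p) (int (fact (\<nu> \<beta>))))) - int (multiplicity (int p) (int n))"
    unfolding eq ord_rat_div[OF pp A0 B0] mA mB by simp
  have L1: "int (p - 1) * int (multiplicity (int p) (int (fact n))) = int n - poly (Qp p n) 1"
    using legendre[OF pp, of n] by simp
  have L2: "int (p - 1) * int (multiplicity (int p) (int (fact (\<nu> \<beta>)))) = int (\<nu> \<beta>) - poly (Qp p (\<nu> \<beta>)) 1" for \<beta>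
    using legendre[OF pp, of "\<nu> \<beta>"] by simp
  have L3: "int (p - 1) * int (multiplicity (int p) (int n)) = poly (Qp p (n - 1)) 1 + 1 - poly (Qp p n) 1"
    using S_Suc_mult[OF pp, of "n - 1"] n0 by simp
  have nsum: "int n = (\<Sum>\<beta>\<in>F. int (\<nu> \<beta>))" unfolding n_def nu_size_def F_def by simp
  have "int (p - 1) * ord_rat p (of_nat (p ^ s) * multinom \<nu> / of_nat n) =
     int (p - 1) * int s + int (p - 1) * int (multiplicity (int p) (int (fact n)))
      - (\<Sum>\<beta>\<in>F. int (p - 1) * int (multiplicity (int p) (int (fact (\<nu> \<beta>)))))
      - int (p - 1) * int (multiplicity (int p) (int n))"
    unfolding ord by (simp add: algebra_simps sum_distrib_left)
  also have "\<dots> = int (p - 1) * int s + (int n - poly (Qp p n) 1)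
      - (\<Sum>\<beta>\<in>F. int (\<nu> \<beta>) - poly (Qp p (\<nu> \<beta>)) 1)
      - (poly (Qp p (n - 1)) 1 + 1 - poly (Qp p n) 1)"
    unfolding L1 L2 L3 by simp
  also have "\<dots> = int (p - 1) * int s + (\<Sum>\<beta>\<in>F. poly (Qp p (\<nu> \<beta>)) 1) - poly (Qp p (n - 1)) 1 - 1"
    using nsum by (simp add: sum_subtractf)
  finally show ?thesis unfolding n_def F_def .
qed



lemma poly_Qp_Suc_nd:
  assumes "p \<ge> 2" "\<not> p dvd Suc k"
  shows "poly (Qp p (Suc k)) x = poly (Qp p k) x + 1"
proof -
  from Suc_digit_cases[OF assms(1), of k] show ?thesis
  proof cases
    case 1
    have "poly (Qp p (Suc k)) x = poly (Qp p (p * (k div p) + (k mod p + 1))) x" by (metis 1(2))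
    also have "\<dots> = int (k mod p + 1) + x * poly (Qp p (k div p)) x"
      by (rule poly_Qp_digit[OF assms(1) 1(1)])
    finally show ?thesis using poly_Qp_rec[OF assms(1), of k x] by simp
  next
    case 2
    then have "p dvd Suc k" by (metis dvd_triv_left add_0_right)
    then show ?thesis using assms(2) by blast
  qed
qed

lemma qv_ge:
  assumes p2: "p \<ge> 2" and x: "x \<ge> int p" and fin: "finite F"
    and nzv: "\<forall>\<beta>\<in>F. nonzero_vec r \<beta>"
    and sums: "\<forall>i<r. (\<Sum>\<beta>\<in>F. \<nu> \<beta> * \<beta> ! i) = \<alpha> ! i"
  shows "(\<Sum>i<r. poly (Qp p (\<alpha> ! i)) x) \<ge> (\<Sum>\<beta>\<in>F. poly (Qp p (\<nu> \<beta>)) x)"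
proof -
  have x0: "x \<ge> 0" using x by simp
  have "(\<Sum>\<beta>\<in>F. poly (Qp p (\<nu> \<beta>)) x) \<le> (\<Sum>\<beta>\<in>F. (\<Sum>i<r. int (\<beta> ! i)) * poly (Qp p (\<nu> \<beta>)) x)"
  proof (rule sum_mono)
    fix \<beta> assume "\<beta> \<in> F"
    then obtain i where i: "i < r" "\<beta> ! i \<noteq> 0" using nzv unfolding nonzero_vec_def by blast
    have "int (\<beta> ! i) \<le> (\<Sum>i<r. int (\<beta> ! i))" using i by (intro member_le_sum) auto
    then have "1 \<le> (\<Sum>i<r. int (\<beta> ! i))" using i by linarith
    moreover have "poly (Qp p (\<nu> \<beta>)) x \<ge> 0" by (rule poly_Qp_nonneg[OF p2 x0])
    ultimately show "poly (Qp p (\<nu> \<beta>)) x \<le> (\<Sum>i<r. int (\<beta> ! i)) * poly (Qp p (\<nu> \<beta>)) x"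
      by (metis mult_1 mult_right_mono)
  qed
  also have "\<dots> = (\<Sum>i<r. \<Sum>\<beta>\<in>F. int (\<beta> ! i) * poly (Qp p (\<nu> \<beta>)) x)"
    by (simp add: sum_distrib_right sum.swap[of _ F])
  also have "\<dots> \<le> (\<Sum>i<r. \<Sum>\<beta>\<in>F. poly (Qp p (\<beta> ! i * \<nu> \<beta>)) x)"
    by (intro sum_mono poly_Qp_super_mult[OF p2 x])
  also have "\<dots> \<le> (\<Sum>i<r. poly (Qp p (\<Sum>\<beta>\<in>F. \<beta> ! i * \<nu> \<beta>)) x)"
    by (intro sum_mono poly_Qp_super_sum[OF p2 x fin])
  also have "\<dots> = (\<Sum>i<r. poly (Qp p (\<alpha> ! i)) x)"
    using sums by (intro sum.cong refl) (simp add: mult.commute)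
  finally show ?thesis .
qed


lemma key:
  assumes pp: "prime p" and nu: "\<nu> \<in> S_set r \<alpha> d" and a: "nonzero_vec r \<alpha>"
    and sdef: "s = multiplicity p (Gcd (set \<alpha>))"
  shows "nu_size \<nu> \<ge> 1 \<and>
    (\<Sum>\<beta>\<in>supp \<nu>. poly (Qp p (\<nu> \<beta>)) 1) + int (p - 1) * int s \<ge> poly (Qp p (nu_size \<nu> - 1)) 1 + 1 \<and>
    ((\<Sum>\<beta>\<in>supp \<nu>. poly (Qp p (\<nu> \<beta>)) 1) + int (p - 1) * int s = poly (Qp p (nu_size \<nu> - 1)) 1 + 1 \<longrightarrow>
      (\<forall>x\<ge>int p. (\<Sum>i<r. poly (Qp p (\<alpha> ! i)) x) > poly (Qp p (nu_size \<nu> - 1)) x))"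
proof -
  have p2: "p \<ge> 2" using pp by (rule prime_ge_2_nat)
  define F where "F = supp \<nu>"
  have fin: "finite F" and nzv: "\<forall>\<beta>\<in>F. nonzero_vec r \<beta>"
    and sums: "\<forall>i<r. (\<Sum>\<beta>\<in>F. \<nu> \<beta> * \<beta> ! i) = \<alpha> ! i"
    using nu unfolding S_set_def F_def by auto
  have vpos: "\<nu> \<beta> \<noteq> 0" if "\<beta> \<in> F" for \<beta> using that unfolding F_def supp_def by simp
  obtain i0 where i0: "i0 < r" "\<alpha> ! i0 \<noteq> 0" and lenr: "length \<alpha> = r"
    using a unfolding nonzero_vec_def by blast
  have Fne: "F \<noteq> {}" using sums i0 by fastforce
  define m where "m = Min ((\<lambda>\<beta>. multiplicity p (\<nu> \<beta>)) ` F)"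
  have "m \<in> (\<lambda>\<beta>. multiplicity p (\<nu> \<beta>)) ` F"
    unfolding m_def using fin Fne by (intro Min_in) auto
  then obtain \<beta>0 where b0: "\<beta>0 \<in> F" "multiplicity p (\<nu> \<beta>0) = m" by auto
  have mle: "m \<le> multiplicity p (\<nu> \<beta>)" if "\<beta> \<in> F" for \<beta>
    unfolding m_def using fin that by (intro Min_le) auto
  have dv: "p ^ m dvd \<nu> \<beta>" if "\<beta> \<in> F" for \<beta>
    using mle[OF that] by (rule multiplicity_dvd')
  have dva: "p ^ m dvd \<alpha> ! i" if "i < r" for i
  proof -
    have "p ^ m dvd (\<Sum>\<beta>\<in>F. \<nu> \<beta> * \<beta> ! i)" using dv by (intro dvd_sum dvd_mult2) auto
    then show ?thesis using sums that by simp
  qed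
  have "p ^ m dvd Gcd (set \<alpha>)"
  proof (rule Gcd_greatest)
    fix b assume "b \<in> set \<alpha>"
    then obtain i where "i < length \<alpha>" "\<alpha> ! i = b" by (auto simp: in_set_conv_nth)
    then show "p ^ m dvd b" using dva lenr by auto
  qed
  moreover have "Gcd (set \<alpha>) \<noteq> 0"
  proof
    assume "Gcd (set \<alpha>) = 0"
    then have "set \<alpha> \<subseteq> {0}" by (simp add: Gcd_0_iff)
    moreover have "\<alpha> ! i0 \<in> set \<alpha>" using i0 lenr by simp
    ultimately show False using i0 by auto
  qed
  moreover have "\<not> is_unit p" using p2 by simp
  ultimately have ms: "m \<le> s" unfolding sdef by (intro multiplicity_geI) auto
  define \<mu> where "\<mu> \<beta> = \<nu> \<beta> div p ^ m" for \<beta>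
  have nm: "\<nu> \<beta> = p ^ m * \<mu> \<beta>" if "\<beta> \<in> F" for \<beta>
    unfolding \<mu>_def using dv[OF that] by simp
  have ndv: "\<not> p dvd \<mu> \<beta>0"
  proof
    assume "p dvd \<mu> \<beta>0"
    then have "p ^ Suc m dvd \<nu> \<beta>0" using nm[OF b0(1)] by (auto intro: mult_dvd_mono)
    then have "Suc m \<le> multiplicity p (\<nu> \<beta>0)"
      using vpos[OF b0(1)] \<open>\<not> is_unit p\<close> by (intro multiplicity_geI) auto
    then show False using b0(2) by simp
  qed
  have "\<mu> \<beta>0 \<noteq> 0" using ndv by (metis dvd_0_right)
  then obtain k0 where k0: "\<mu> \<beta>0 = Suc k0" using not0_implies_Suc by blast
  define F' where "F' = F - {\<beta>0}"
  have finF': "finite F'" using fin unfolding F'_def by simp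
  define n2 where "n2 = (\<Sum>\<beta>\<in>F. \<mu> \<beta>)"
  define \<sigma> where "\<sigma> = (\<Sum>\<beta>\<in>F'. \<mu> \<beta>)"
  have n2e: "n2 = Suc k0 + \<sigma>" unfolding n2_def \<sigma>_def F'_def
    using fin b0(1) k0 by (simp add: sum.remove)
  have nsz: "nu_size \<nu> = p ^ m * n2"
  proof -
    have "nu_size \<nu> = (\<Sum>\<beta>\<in>F. \<nu> \<beta>)" unfolding nu_size_def F_def ..
    also have "\<dots> = (\<Sum>\<beta>\<in>F. p ^ m * \<mu> \<beta>)" using nm by (intro sum.cong) auto
    finally show ?thesis unfolding n2_def by (simp add: sum_distrib_left)
  qed
  have pm: "p ^ m \<ge> 1" using p2 by simp
  have n1: "nu_size \<nu> \<ge> 1" using nsz n2e pm by simp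
  have nm1: "nu_size \<nu> - 1 = p ^ m * (n2 - 1) + (p ^ m - 1)"
    using nsz n2e pm by (simp add: algebra_simps)
  have n2m1: "n2 - 1 = k0 + \<sigma>" using n2e by simp
  have Sn: "poly (Qp p (nu_size \<nu> - 1)) 1 = poly (Qp p (n2 - 1)) 1 + int (p - 1) * int m"
    using poly_Qp_pow[OF p2, of "p ^ m - 1" m "n2 - 1" 1] pm S_pm1[OF p2, of m] nm1 by simp
  have En: "poly (Qp p (nu_size \<nu> - 1)) x < x ^ m * (poly (Qp p (n2 - 1)) x + 1)" if x: "x \<ge> int p" for x
  proof -
    have "poly (Qp p (nu_size \<nu> - 1)) x = x ^ m * poly (Qp p (n2 - 1)) x + poly (Qp p (p ^ m - 1)) x"
      using poly_Qp_pow[OF p2, of "p ^ m - 1" m "n2 - 1" x] pm nm1 by simp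
    moreover have "poly (Qp p (p ^ m - 1)) x < x ^ m" using pm by (intro poly_Qp_small[OF p2 x]) auto
    ultimately show ?thesis by (simp add: algebra_simps)
  qed
  have Snu: "poly (Qp p (\<nu> \<beta>)) x = x ^ m * poly (Qp p (\<mu> \<beta>)) x" if "\<beta> \<in> F" for \<beta> x
    using nm[OF that] poly_Qp_pow0[OF p2] by simp
  define T where "T = (\<Sum>\<beta>\<in>supp \<nu>. poly (Qp p (\<nu> \<beta>)) 1)"
  have Tmu: "T = (\<Sum>\<beta>\<in>F. poly (Qp p (\<mu> \<beta>)) 1)"
    unfolding T_def F_def[symmetric] using Snu[of _ 1] by (intro sum.cong) auto
  have sumF: "(\<Sum>\<beta>\<in>F. poly (Qp p (\<mu> \<beta>)) x) = poly (Qp p (Suc k0)) x + (\<Sum>\<beta>\<in>F'. poly (Qp p (\<mu> \<beta>)) x)" for x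
    unfolding F'_def using fin b0(1) k0 by (simp add: sum.remove)
  have Ek0: "poly (Qp p (Suc k0)) x = poly (Qp p k0) x + 1" for x
    using poly_Qp_Suc_nd[OF p2] ndv k0 by simp
  note sub1 = poly_Qp_sub[OF p2, of k0 \<sigma>]
  note sub2 = poly_Qp_sub_sum[OF p2 finF', of \<mu>, folded \<sigma>_def]
  note sub1a = conjunct1[OF sub1] and sub2a = conjunct1[OF sub2]
  have nn: "poly (Qp p (n2 - 1)) y = poly (Qp p (k0 + \<sigma>)) y" for y by (simp only: n2m1)
  have Tge: "T \<ge> poly (Qp p (n2 - 1)) 1 + 1"
    using Tmu sumF[of 1] Ek0[of 1] sub1a sub2a nn[of 1] by linarith
  have msi: "int (p - 1) * int m \<le> int (p - 1) * int s" using ms by (intro mult_left_mono) auto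
  have part2: "T + int (p - 1) * int s \<ge> poly (Qp p (nu_size \<nu> - 1)) 1 + 1"
    using Tge Sn msi by linarith
  have part3: "(\<forall>x\<ge>int p. (\<Sum>i<r. poly (Qp p (\<alpha> ! i)) x) > poly (Qp p (nu_size \<nu> - 1)) x)"
    if eq: "T + int (p - 1) * int s = poly (Qp p (nu_size \<nu> - 1)) 1 + 1"
  proof (intro allI impI)
    fix x :: int assume x: "x \<ge> int p"
    have Teq: "T = poly (Qp p (n2 - 1)) 1 + 1" using eq Tge Sn msi by linarith
    have e1: "poly (Qp p (k0 + \<sigma>)) 1 = poly (Qp p k0) 1 + poly (Qp p \<sigma>) 1"
      using Teq Tmu sumF[of 1] Ek0[of 1] sub1a sub2a nn[of 1] by linarith
    have e2: "poly (Qp p \<sigma>) 1 = (\<Sum>\<beta>\<in>F'. poly (Qp p (\<mu> \<beta>)) 1)"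
      using Teq Tmu sumF[of 1] Ek0[of 1] sub1a sub2a nn[of 1] by linarith
    have "poly (Qp p (n2 - 1)) x = poly (Qp p k0) x + poly (Qp p \<sigma>) x"
      using sub1 e1 nn by metis
    also have "poly (Qp p \<sigma>) x = (\<Sum>\<beta>\<in>F'. poly (Qp p (\<mu> \<beta>)) x)"
      using sub2 e2 by blast
    finally have "(\<Sum>\<beta>\<in>F. poly (Qp p (\<mu> \<beta>)) x) = poly (Qp p (n2 - 1)) x + 1"
      using sumF[of x] Ek0[of x] by simp
    then have "(\<Sum>\<beta>\<in>F. poly (Qp p (\<nu> \<beta>)) x) = x ^ m * (poly (Qp p (n2 - 1)) x + 1)"
    proof -
      assume h: "(\<Sum>\<beta>\<in>F. poly (Qp p (\<mu> \<beta>)) x) = poly (Qp p (n2 - 1)) x + 1"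
      have "(\<Sum>\<beta>\<in>F. poly (Qp p (\<nu> \<beta>)) x) = (\<Sum>\<beta>\<in>F. x ^ m * poly (Qp p (\<mu> \<beta>)) x)"
        using Snu by (intro sum.cong) auto
      also have "\<dots> = x ^ m * (\<Sum>\<beta>\<in>F. poly (Qp p (\<mu> \<beta>)) x)" by (simp add: sum_distrib_left)
      finally show ?thesis using h by simp
    qed
    then have "(\<Sum>\<beta>\<in>F. poly (Qp p (\<nu> \<beta>)) x) > poly (Qp p (nu_size \<nu> - 1)) x"
      using En[OF x] by simp
    moreover have "(\<Sum>i<r. poly (Qp p (\<alpha> ! i)) x) \<ge> (\<Sum>\<beta>\<in>F. poly (Qp p (\<nu> \<beta>)) x)"
      by (rule qv_ge[OF p2 x fin nzv sums])
    ultimately show "(\<Sum>i<r. poly (Qp p (\<alpha> ! i)) x) > poly (Qp p (nu_size \<nu> - 1)) x" by simp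
  qed
  show ?thesis using n1 part2 part3 unfolding T_def by blast
qed



lemma poly_Qp_vec: "poly (Qp_vec p \<alpha>) x = (\<Sum>i<length \<alpha>. poly (Qp p (\<alpha> ! i)) x)"
  unfolding Qp_vec_def by (simp add: poly_sum)

lemma sum_list_upt_lessThan: "sum_list (map f [0..<n]) = (\<Sum>i<n. f i)"
  by (simp add: sum_set_upt_conv_sum_list_nat[symmetric] atLeast0LessThan)

theorem lemma2p10:
  fixes r d p :: nat and \<alpha> :: "nat list"
  assumes "r \<ge> 1"
    and "nonzero_vec r \<alpha>"
    and "d < sum_list \<alpha>"
    and "prime p"
  shows "(\<exists>\<nu>\<in>S_set r \<alpha> d.
            ord_rat p (of_nat (p ^ multiplicity p (Gcd (set \<alpha>))) * multinom \<nu> / of_nat (nu_size \<nu>)) = 0)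
         \<longleftrightarrow> poly_gt (Qp_vec p \<alpha>) (Qp p d)"
proof -
  note pp = assms(4)
  have p2: "p \<ge> 2" using pp by (rule prime_ge_2_nat)
  define s where "s = multiplicity p (Gcd (set \<alpha>))"
  have lenr: "length \<alpha> = r" using assms(2) unfolding nonzero_vec_def by simp
  have pm1: "int (p - 1) > 0" using p2 by simp
  show ?thesis unfolding s_def[symmetric]
  proof
    assume "\<exists>\<nu>\<in>S_set r \<alpha> d. ord_rat p (of_nat (p ^ s) * multinom \<nu> / of_nat (nu_size \<nu>)) = 0"
    then obtain \<nu> where nu: "\<nu> \<in> S_set r \<alpha> d"
      and o0: "ord_rat p (of_nat (p ^ s) * multinom \<nu> / of_nat (nu_size \<nu>)) = 0" by blast
    have fin: "finite (supp \<nu>)" and dn: "d < nu_size \<nu>" using nu unfolding S_set_def by auto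
    note K = key[OF pp nu assms(2) s_def]
    have n1: "nu_size \<nu> \<ge> 1" using K by blast
    have "int (p - 1) * int s + (\<Sum>\<beta>\<in>supp \<nu>. poly (Qp p (\<nu> \<beta>)) 1) - poly (Qp p (nu_size \<nu> - 1)) 1 - 1 = 0"
      using ord_formula[OF pp fin n1, of s] o0 by simp
    then have "\<forall>x\<ge>int p. (\<Sum>i<r. poly (Qp p (\<alpha> ! i)) x) > poly (Qp p (nu_size \<nu> - 1)) x"
      using K by (simp add: algebra_simps)
    then have "\<forall>x\<ge>int p. poly (Qp_vec p \<alpha>) x > poly (Qp p d) x"
    proof (intro allI impI)
      fix x :: int assume x: "x \<ge> int p" and
        h: "\<forall>x\<ge>int p. (\<Sum>i<r. poly (Qp p (\<alpha> ! i)) x) > poly (Qp p (nu_size \<nu> - 1)) x"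
      have "poly (Qp p d) x \<le> poly (Qp p (nu_size \<nu> - 1)) x"
        using dn by (intro poly_Qp_mono[OF p2 x]) simp
      moreover have "(\<Sum>i<r. poly (Qp p (\<alpha> ! i)) x) > poly (Qp p (nu_size \<nu> - 1)) x"
        using h x by blast
      ultimately show "poly (Qp_vec p \<alpha>) x > poly (Qp p d) x"
        by (simp add: poly_Qp_vec lenr)
    qed
    then show "poly_gt (Qp_vec p \<alpha>) (Qp p d)" unfolding poly_gt_def by blast
  next
    assume "poly_gt (Qp_vec p \<alpha>) (Qp p d)"
    then obtain N where hN: "\<forall>x\<ge>N. (\<Sum>i<r. poly (Qp p (\<alpha> ! i)) x) > poly (Qp p d) x"
      unfolding poly_gt_def by (auto simp: poly_Qp_vec lenr)
    define \<alpha>' where "\<alpha>' i = \<alpha> ! i div p ^ s" for i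
    define d' where "d' = d div p ^ s"
    have dvG: "p ^ s dvd Gcd (set \<alpha>)" unfolding s_def by (rule multiplicity_dvd)
    have aa: "\<alpha> ! i = p ^ s * \<alpha>' i" if "i < r" for i
    proof -
      have "Gcd (set \<alpha>) dvd \<alpha> ! i" using that lenr by (intro Gcd_dvd) simp
      then have "p ^ s dvd \<alpha> ! i" using dvG by (rule dvd_trans[rotated])
      then show ?thesis unfolding \<alpha>'_def by simp
    qed
    have dd: "d = p ^ s * d' + d mod p ^ s" unfolding d'_def by simp
    have hyp': "\<exists>N. \<forall>x\<ge>N. (\<Sum>i<r. poly (Qp p (\<alpha>' i)) x) > poly (Qp p d') x"
    proof (intro exI allI impI)
      fix x :: int assume x: "x \<ge> max N 1"
      have x0: "x ^ s > 0" using x by simp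
      have "(\<Sum>i<r. poly (Qp p (\<alpha> ! i)) x) = x ^ s * (\<Sum>i<r. poly (Qp p (\<alpha>' i)) x)"
        using aa poly_Qp_pow0[OF p2] by (simp add: sum_distrib_left)
      moreover have "poly (Qp p d) x = x ^ s * poly (Qp p d') x + poly (Qp p (d mod p ^ s)) x"
        using poly_Qp_pow[OF p2, of "d mod p ^ s" s d' x] dd p2 by simp
      moreover have "poly (Qp p (d mod p ^ s)) x \<ge> 0" using x by (intro poly_Qp_nonneg[OF p2]) simp
      moreover have "poly (Qp p d) x < (\<Sum>i<r. poly (Qp p (\<alpha> ! i)) x)" using hN x by simp
      ultimately have "x ^ s * (\<Sum>i<r. poly (Qp p (\<alpha>' i)) x) > x ^ s * poly (Qp p d') x"
        by linarith
      then show "(\<Sum>i<r. poly (Qp p (\<alpha>' i)) x) > poly (Qp p d') x"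
        using x0 by (simp add: mult_less_cancel_left_pos)
    qed
    obtain \<gamma> where g: "\<forall>i<r. \<gamma> i \<le> \<alpha>' i" "(\<Sum>i<r. \<gamma> i) = d'"
      "(\<Sum>i<r. poly (Qp p (\<gamma> i)) 1) \<le> poly (Qp p d') 1" "d' < (\<Sum>i<r. \<alpha>' i)"
      using G_lemma[OF p2 hyp'] by blast
    define e where "e i = (replicate r 0)[i := (1::nat)]" for i
    define R where "R = map (\<lambda>i. \<alpha>' i - \<gamma> i) [0..<r]"
    define ps where "ps = map (\<lambda>i. (e i, p ^ s * \<gamma> i)) [0..<r] @ [(R, p ^ s)]"
    define \<nu> where "\<nu> = nu_of ps"
    have ej: "e i ! j = (if i = j then 1 else 0)" if "i < r" "j < r" for i j
      using that unfolding e_def by (simp add: nth_list_update)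
    have sumh: "(\<Sum>\<beta>\<in>supp \<nu>. \<nu> \<beta> * h \<beta>) = (\<Sum>i<r. p ^ s * \<gamma> i * h (e i)) + p ^ s * h R" for h
      unfolding \<nu>_def nu_of_sum ps_def by (simp add: sum_list_upt_lessThan)
    have fin: "finite (supp \<nu>)" unfolding \<nu>_def by (rule finite_subset[OF supp_nu_of]) simp
    have nzR: "nonzero_vec r R"
    proof -
      have "\<exists>i<r. \<alpha>' i - \<gamma> i \<noteq> 0"
      proof (rule ccontr)
        assume "\<not> ?thesis"
        then have "\<forall>i<r. \<alpha>' i = \<gamma> i" using g(1) by (metis diff_is_0_eq le_antisym)
        then have "(\<Sum>i<r. \<alpha>' i) = (\<Sum>i<r. \<gamma> i)" by simp
        then show False using g(2,4) by simp
      qed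
      then show ?thesis unfolding nonzero_vec_def R_def by auto
    qed
    have nze: "nonzero_vec r (e i)" if "i < r" for i
      unfolding nonzero_vec_def using that ej[OF that that] by (auto simp: e_def)
    have nz: "\<forall>\<beta>\<in>supp \<nu>. nonzero_vec r \<beta>"
    proof
      fix \<beta> assume "\<beta> \<in> supp \<nu>"
      then have "\<beta> \<in> fst ` set ps" using supp_nu_of unfolding \<nu>_def by blast
      then show "nonzero_vec r \<beta>" unfolding ps_def using nze nzR by auto
    qed
    have sums: "\<forall>j<r. (\<Sum>\<beta>\<in>supp \<nu>. \<nu> \<beta> * \<beta> ! j) = \<alpha> ! j"
    proof (intro allI impI)
      fix j assume j: "j < r"
      have "(\<Sum>i<r. p ^ s * \<gamma> i * (e i ! j)) = (\<Sum>i<r. if i = j then p ^ s * \<gamma> i else 0)"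
        using ej j by (intro sum.cong) auto
      also have "\<dots> = p ^ s * \<gamma> j" using j by simp
      finally have A: "(\<Sum>i<r. p ^ s * \<gamma> i * (e i ! j)) = p ^ s * \<gamma> j" .
      have "R ! j = \<alpha>' j - \<gamma> j" unfolding R_def using j by simp
      then have "(\<Sum>\<beta>\<in>supp \<nu>. \<nu> \<beta> * \<beta> ! j) = p ^ s * \<gamma> j + p ^ s * (\<alpha>' j - \<gamma> j)"
        using sumh[of "\<lambda>\<beta>. \<beta> ! j"] A by simp
      also have "\<dots> = p ^ s * \<alpha>' j" using g(1) j by (simp add: algebra_simps)
      also have "\<dots> = \<alpha> ! j" using aa j by simp
      finally show "(\<Sum>\<beta>\<in>supp \<nu>. \<nu> \<beta> * \<beta> ! j) = \<alpha> ! j" .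
    qed
    have nsz: "nu_size \<nu> = p ^ s * (d' + 1)"
    proof -
      have "nu_size \<nu> = (\<Sum>\<beta>\<in>supp \<nu>. \<nu> \<beta> * 1)" unfolding nu_size_def by simp
      also have "\<dots> = (\<Sum>i<r. p ^ s * \<gamma> i) + p ^ s" using sumh[of "\<lambda>_. 1"] by simp
      also have "\<dots> = p ^ s * (\<Sum>i<r. \<gamma> i) + p ^ s" by (simp add: sum_distrib_left)
      also have "\<dots> = p ^ s * (d' + 1)" using g(2) by simp
      finally show ?thesis .
    qed
    have ps0: "p ^ s > 0" using p2 by simp
    have dlt: "d < nu_size \<nu>"
    proof -
      have "d mod p ^ s < p ^ s" using ps0 by simp
      then show ?thesis using dd nsz by (simp add: algebra_simps)
    qed
    have nuS: "\<nu> \<in> S_set r \<alpha> d" unfolding S_set_def using fin nz sums dlt by blast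
    note K = key[OF pp nuS assms(2) s_def]
    have n1: "nu_size \<nu> \<ge> 1" using K by blast
    have S1: "poly (Qp p (p ^ s * a)) 1 = poly (Qp p a) 1" for a using poly_Qp_pow0[OF p2, of s a 1] by simp
    have S11: "poly (Qp p (Suc 0)) 1 = 1"
      using poly_Qp_eq[OF p2, of "Suc 0" 0 1 1] p2 by simp
    have Tle: "(\<Sum>\<beta>\<in>supp \<nu>. poly (Qp p (\<nu> \<beta>)) 1) \<le> poly (Qp p d') 1 + 1"
    proof -
      have "(\<Sum>\<beta>\<in>supp \<nu>. poly (Qp p (\<nu> \<beta>)) 1) \<le> sum_list (map (\<lambda>q. poly (Qp p (snd q)) 1) ps)"
        unfolding \<nu>_def by (rule nu_of_S[OF p2])
      also have "\<dots> = (\<Sum>i<r. poly (Qp p (\<gamma> i)) 1) + 1"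
        using S1[of 1] S11 unfolding ps_def by (simp add: sum_list_upt_lessThan S1)
      finally show ?thesis using g(3) by simp
    qed
    have Sn: "poly (Qp p (nu_size \<nu> - 1)) 1 = poly (Qp p d') 1 + int (p - 1) * int s"
    proof -
      have "nu_size \<nu> = p ^ s * d' + p ^ s" using nsz by (simp add: algebra_simps)
      then have "nu_size \<nu> - 1 = p ^ s * d' + (p ^ s - 1)" using ps0 by linarith
      then show ?thesis using poly_Qp_pow[OF p2, of "p ^ s - 1" s d' 1] ps0 S_pm1[OF p2, of s] by simp
    qed
    have eq: "(\<Sum>\<beta>\<in>supp \<nu>. poly (Qp p (\<nu> \<beta>)) 1) + int (p - 1) * int s = poly (Qp p (nu_size \<nu> - 1)) 1 + 1"
      using K Tle Sn by linarith
    have "int (p - 1) * ord_rat p (of_nat (p ^ s) * multinom \<nu> / of_nat (nu_size \<nu>)) = 0"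
      using ord_formula[OF pp fin n1, of s] eq by simp
    then have "ord_rat p (of_nat (p ^ s) * multinom \<nu> / of_nat (nu_size \<nu>)) = 0" using pm1 by simp
    then show "\<exists>\<nu>\<in>S_set r \<alpha> d. ord_rat p (of_nat (p ^ s) * multinom \<nu> / of_nat (nu_size \<nu>)) = 0"
      using nuS by blast
  qed
qed


end
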